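(* Let $f:[0,\infty)\to[0,\infty)$ be continuously differentiable with $f>0$ on $[t_0,\infty)$ for some $t_0\ge0$ and $f\in C^2([t_0,\infty))$, let $g=\log f$ on $[t_0,\infty)$, and assume condition (H1) of the context with the pair $(q,p)$. Then for every $\varepsilon\in(0,q)$ there exists $t_\varepsilon\ge t_0$ such that $$\left(\frac{g(t)}{g(s)}\right)^{\frac1{q+\varepsilon}}\le\frac{g'(t)}{g'(s)}\le\left(\frac{g(t)}{g(s)}\right)^{\frac1{q-\varepsilon}}$$ for all $t>s\ge t_\varepsilon$.
   Context: Condition (H1): (i) $g'(t)>0$ and $g''(t)>0$ for all $t\ge t_0$, and there is a pair $(q,p)$ with either $q=1$ and $p\in(0,\infty]$, or $q\in(1,\infty)$ and $p\in(0,\infty)$, such that $\lim_{t\to\infty}\frac{g'(t)^2}{g(t)g''(t)}=q$ and $\lim_{t\to\infty}\frac{tg'(t)}{g(t)}=p$; (ii) if $q=1$, then $tg'(t)/g(t)$ is nondecreasing on $[t_0,\infty)$ and there exist $k\in\mathbb{N}$ and $\hat g\in C^2([t_0,\infty))$ with $f=\exp_k\circ\hat g$ and $\hat g'/\hat g$ nonincreasing on $[t_0,\infty)$ ($\exp_1=\exp$, $\exp_k=\exp_{k-1}\circ\exp$). *)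

theory Defs
  imports "HOL-Analysis.Analysis"
begin

end

theory Submission
  imports Defs
begin

lemma mono_aux:
  fixes F :: "real \<Rightarrow> real"
  assumes "a \<le> b" "\<And>x. a \<le> x \<Longrightarrow> x \<le> b \<Longrightarrow> \<exists>y. (F has_real_derivative y) (at x) \<and> y \<ge> 0"
  shows "F a \<le> F b"
  using DERIV_nonneg_imp_nondecreasing[of a b F] assms by blast

lemma cancel_aux:
  fixes Q L a b :: real
  assumes "Q \<noteq> 0" "L \<noteq> 0"
  shows "Q * (L * a) / (b * L * Q) = a / b"
proof -
  have "Q * (L * a) / (b * L * Q) = (L * Q) * a / ((L * Q) * b)" by (simp add: ac_simps)
  also have "\<dots> = a / b" using assms by simp
  finally show ?thesis .
qed

theorem lemma2p7:
  fixes f f1 f2 g1 g2 :: "real \<Rightarrow> real" and t0 q :: real and p :: ereal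
  assumes t0: "t0 \<ge> 0"
    and f_C1: "\<And>t. t \<ge> 0 \<Longrightarrow> (f has_real_derivative f1 t) (at t within {0..})"
    and f1_cont: "continuous_on {0..} f1"
    and f_nonneg: "\<And>t. t \<ge> 0 \<Longrightarrow> f t \<ge> 0"
    and f_pos: "\<And>t. t \<ge> t0 \<Longrightarrow> f t > 0"
    and f_C2: "\<And>t. t \<ge> t0 \<Longrightarrow> (f1 has_real_derivative f2 t) (at t within {t0..})"
    and f2_cont: "continuous_on {t0..} f2"
    and g_deriv: "\<And>t. t \<ge> t0 \<Longrightarrow> ((\<lambda>x. ln (f x)) has_real_derivative g1 t) (at t within {t0..})"
    and g1_deriv: "\<And>t. t \<ge> t0 \<Longrightarrow> (g1 has_real_derivative g2 t) (at t within {t0..})"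
    \<comment> \<open>(H1)(i)\<close>
    and g1_pos: "\<And>t. t \<ge> t0 \<Longrightarrow> g1 t > 0"
    and g2_pos: "\<And>t. t \<ge> t0 \<Longrightarrow> g2 t > 0"
    and qp: "(q = 1 \<and> 0 < p) \<or> (q > 1 \<and> 0 < p \<and> p < \<infinity>)"
    and lim_q: "((\<lambda>t. (g1 t)\<^sup>2 / (ln (f t) * g2 t)) \<longlongrightarrow> q) at_top"
    and lim_p: "((\<lambda>t. ereal (t * g1 t / ln (f t))) \<longlongrightarrow> p) at_top"
    \<comment> \<open>(H1)(ii)\<close>
    and H1ii: "q = 1 \<Longrightarrow>
       mono_on {t0..} (\<lambda>t. t * g1 t / ln (f t)) \<and>
       (\<exists>k::nat. k \<ge> 1 \<and> (\<exists>gh gh1 gh2 :: real \<Rightarrow> real.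
          (\<forall>t\<ge>t0. (gh has_real_derivative gh1 t) (at t within {t0..})) \<and>
          (\<forall>t\<ge>t0. (gh1 has_real_derivative gh2 t) (at t within {t0..})) \<and>
          continuous_on {t0..} gh2 \<and>
          (\<forall>t\<ge>t0. f t = (exp ^^ k) (gh t)) \<and>
          antimono_on {t0..} (\<lambda>t. gh1 t / gh t)))"
  shows "\<forall>\<epsilon>. 0 < \<epsilon> \<and> \<epsilon> < q \<longrightarrow>
     (\<exists>t\<epsilon>\<ge>t0. \<forall>t s. t\<epsilon> \<le> s \<and> s < t \<longrightarrow>
        (ln (f t) / ln (f s)) powr (1 / (q + \<epsilon>)) \<le> g1 t / g1 s \<and>
        g1 t / g1 s \<le> (ln (f t) / ln (f s)) powr (1 / (q - \<epsilon>)))"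
proof (intro allI impI)
  fix e :: real
  assume e: "0 < e \<and> e < q"
  define r where "r = (\<lambda>t. (g1 t)\<^sup>2 / (ln (f t) * g2 t))"
  have ev: "eventually (\<lambda>t. r t > 0 \<and> q - e < r t \<and> r t < q + e) at_top"
  proof -
    have "eventually (\<lambda>t. r t \<in> {max 0 (q - e) <..< q + e}) at_top"
      using lim_q e unfolding r_def
      by (intro topological_tendstoD) auto
    then show ?thesis by eventually_elim auto
  qed
  then obtain T where T: "\<And>t. t \<ge> T \<Longrightarrow> r t > 0 \<and> q - e < r t \<and> r t < q + e"
    by (auto simp: eventually_at_top_linorder)
  define T' where "T' = max T (t0 + 1)"
  have P: "ln (f t) > 0 \<and> (q - e) * (ln (f t) * g2 t) < (g1 t)\<^sup>2 \<and> (g1 t)\<^sup>2 < (q + e) * (ln (f t) * g2 t)"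
    if "t \<ge> T'" for t
  proof -
    have tt: "t \<ge> t0" "t \<ge> T" using that unfolding T'_def by auto
    have g2p: "g2 t > 0" using g2_pos tt by auto
    have rr: "r t > 0" "q - e < r t" "r t < q + e" using T[OF tt(2)] by auto
    have lp: "ln (f t) > 0"
    proof (rule ccontr)
      assume "\<not> ln (f t) > 0"
      then have "ln (f t) * g2 t \<le> 0" using g2p by (simp add: mult_nonpos_nonneg)
      then have "r t \<le> 0" unfolding r_def by (simp add: divide_nonneg_nonpos)
      then show False using rr by simp
    qed
    have den: "ln (f t) * g2 t > 0" using lp g2p by simp
    have "q - e < (g1 t)\<^sup>2 / (ln (f t) * g2 t)" "(g1 t)\<^sup>2 / (ln (f t) * g2 t) < q + e"
      using rr unfolding r_def by auto
    then show ?thesis using den lp by (simp add: pos_less_divide_eq pos_divide_less_eq)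
  qed
  have D: "((\<lambda>x. ln (f x)) has_real_derivative g1 x) (at x)"
    "(g1 has_real_derivative g2 x) (at x)" if "x > t0" for x
  proof -
    have "at x within {t0..} = at x"
      using that by (intro at_within_interior) auto
    then show "((\<lambda>x. ln (f x)) has_real_derivative g1 x) (at x)"
      "(g1 has_real_derivative g2 x) (at x)"
      using g_deriv[of x] g1_deriv[of x] that by auto
  qed
  have DL: "((\<lambda>x. ln (ln (f x))) has_real_derivative g1 x / ln (f x)) (at x)"
    "((\<lambda>x. ln (g1 x)) has_real_derivative g2 x / g1 x) (at x)" if "x \<ge> T'" for x
  proof -
    have x: "x > t0" using that unfolding T'_def by auto
    have lp: "ln (f x) > 0" using P that by auto
    have gp: "g1 x > 0" using g1_pos x by auto
    show "((\<lambda>x. ln (ln (f x))) has_real_derivative g1 x / ln (f x)) (at x)"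
      using DERIV_chain2[OF DERIV_ln[OF lp] D(1)[OF x]] by (simp add: divide_inverse mult.commute)
    show "((\<lambda>x. ln (g1 x)) has_real_derivative g2 x / g1 x) (at x)"
      using DERIV_chain2[OF DERIV_ln[OF gp] D(2)[OF x]] by (simp add: divide_inverse mult.commute)
  qed
  show "\<exists>t\<epsilon>\<ge>t0. \<forall>t s. t\<epsilon> \<le> s \<and> s < t \<longrightarrow>
        (ln (f t) / ln (f s)) powr (1 / (q + e)) \<le> g1 t / g1 s \<and>
        g1 t / g1 s \<le> (ln (f t) / ln (f s)) powr (1 / (q - e))"
  proof (intro exI[of _ T'] conjI allI impI)
    show "t0 \<le> T'" unfolding T'_def by auto
    fix t s assume ts: "T' \<le> s \<and> s < t"
    have pos: "ln (f t) > 0" "ln (f s) > 0" "g1 t > 0" "g1 s > 0"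
      using P[of t] P[of s] g1_pos[of t] g1_pos[of s] ts unfolding T'_def by auto
    have qe1: "q + e > 0" "q - e > 0" using e by auto
    have A: "ln (ln (f s)) / (q + e) - ln (g1 s) \<ge> ln (ln (f t)) / (q + e) - ln (g1 t)"
    proof -
      have "ln (g1 s) - ln (ln (f s)) / (q + e) \<le> ln (g1 t) - ln (ln (f t)) / (q + e)"
      proof (rule mono_aux[where F = "\<lambda>x. ln (g1 x) - ln (ln (f x)) / (q + e)"])
        show "s \<le> t" using ts by simp
        fix x assume x: "s \<le> x" "x \<le> t"
        then have xT: "x \<ge> T'" using ts by auto
        have Px: "ln (f x) > 0" "(g1 x)\<^sup>2 < (q + e) * (ln (f x) * g2 x)" using P[OF xT] by auto
        have g1x: "g1 x > 0" using g1_pos[of x] xT unfolding T'_def by auto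
        have "0 \<le> g2 x / g1 x - g1 x / ln (f x) / (q + e)"
        proof -
          have "g1 x / ln (f x) / (q + e) = (g1 x)\<^sup>2 / (g1 x * ln (f x) * (q + e))"
            using g1x Px qe1 by (simp add: power2_eq_square mult.assoc)
          also have "\<dots> \<le> ((q + e) * (ln (f x) * g2 x)) / (g1 x * ln (f x) * (q + e))"
            using Px g1x qe1 by (intro divide_right_mono) auto
          also have "\<dots> = g2 x / g1 x" using Px g1x qe1 by (intro cancel_aux) auto
          finally show ?thesis by simp
        qed
        moreover have "((\<lambda>x. ln (g1 x) - ln (ln (f x)) / (q + e)) has_real_derivative
             g2 x / g1 x - g1 x / ln (f x) / (q + e)) (at x)"
          using DERIV_diff[OF DL(2)[OF xT] DERIV_cdivide[OF DL(1)[OF xT]]] by simp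
        ultimately show "\<exists>y. ((\<lambda>x. ln (g1 x) - ln (ln (f x)) / (q + e)) has_real_derivative y) (at x) \<and> 0 \<le> y"
          by blast
      qed
      then show ?thesis by simp
    qed
    have B: "ln (ln (f s)) / (q - e) - ln (g1 s) \<le> ln (ln (f t)) / (q - e) - ln (g1 t)"
    proof (rule mono_aux[where F = "\<lambda>x. ln (ln (f x)) / (q - e) - ln (g1 x)"])
      show "s \<le> t" using ts by simp
      fix x assume x: "s \<le> x" "x \<le> t"
      then have xT: "x \<ge> T'" using ts by auto
      have Px: "ln (f x) > 0" "(q - e) * (ln (f x) * g2 x) < (g1 x)\<^sup>2" using P[OF xT] by auto
      have g1x: "g1 x > 0" using g1_pos[of x] xT unfolding T'_def by auto
      have "0 \<le> g1 x / ln (f x) / (q - e) - g2 x / g1 x"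
      proof -
        have "g2 x / g1 x = ((q - e) * (ln (f x) * g2 x)) / (g1 x * ln (f x) * (q - e))"
          using Px g1x qe1 by (intro cancel_aux[symmetric]) auto
        also have "\<dots> \<le> (g1 x)\<^sup>2 / (g1 x * ln (f x) * (q - e))"
          using Px g1x qe1 by (intro divide_right_mono) auto
        also have "\<dots> = g1 x / ln (f x) / (q - e)"
          using g1x Px qe1 by (simp add: power2_eq_square mult.assoc)
        finally show ?thesis by simp
      qed
      moreover have "((\<lambda>x. ln (ln (f x)) / (q - e) - ln (g1 x)) has_real_derivative
           g1 x / ln (f x) / (q - e) - g2 x / g1 x) (at x)"
        using DERIV_diff[OF DERIV_cdivide[OF DL(1)[OF xT]] DL(2)[OF xT]] by simp
      ultimately show "\<exists>y. ((\<lambda>x. ln (ln (f x)) / (q - e) - ln (g1 x)) has_real_derivative y) (at x) \<and> 0 \<le> y"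
        by blast
    qed
    have rat: "ln (ln (f t) / ln (f s)) = ln (ln (f t)) - ln (ln (f s))"
      "ln (g1 t / g1 s) = ln (g1 t) - ln (g1 s)"
      using pos by (simp_all add: ln_div)
    have dpos: "ln (f t) / ln (f s) > 0" "g1 t / g1 s > 0" using pos by auto
    have "(ln (f t) / ln (f s)) powr (1 / (q + e)) = exp ((ln (ln (f t)) - ln (ln (f s))) / (q + e))"
      using dpos rat pos by (simp add: powr_def)
    also have "\<dots> \<le> exp (ln (g1 t / g1 s))"
      using A rat by (simp add: diff_divide_distrib)
    also have "\<dots> = g1 t / g1 s" using dpos by simp
    finally show "(ln (f t) / ln (f s)) powr (1 / (q + e)) \<le> g1 t / g1 s" .
    have "g1 t / g1 s = exp (ln (g1 t / g1 s))" using dpos by simp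
    also have "\<dots> \<le> exp ((ln (ln (f t)) - ln (ln (f s))) / (q - e))"
      using B rat by (simp add: diff_divide_distrib)
    also have "\<dots> = (ln (f t) / ln (f s)) powr (1 / (q - e))"
      using dpos rat pos by (simp add: powr_def)
    finally show "g1 t / g1 s \<le> (ln (f t) / ln (f s)) powr (1 / (q - e))" .
  qed
qed

end
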